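(* Let $\mathscr{A}$ be a finite alphabet, let $\Xi\subseteq\mathscr{A}^{\mathbb{Z}}$ be a periodically approximable subshift and let $(\Xi_k)_k$ be a sequence of periodic subshifts converging to $\Xi$. If $\Xi$ contains a non-periodic element, then the period $q_k=\#\Xi_k$ tends to infinity as $k\to\infty$.
   Context: $\mathscr{A}^{\mathbb{Z}}$ has the product topology and shift $(T\xi)(j)=\xi(j-1)$; a subshift is a non-empty closed $T$-invariant subset, and the set of subshifts carries the Hausdorff (Vietoris) topology (basis: $\{\Xi:\Xi\cap F=\emptyset,\Xi\cap O\neq\emptyset\ \forall O\in\mathcal{F}\}$, $F$ closed, $\mathcal{F}$ a finite family of open sets). $\eta$ is periodic if $T^n\eta=\eta$ for some $n\geq1$; a periodic subshift is $\mathrm{Orb}(\eta)=\{T^n\eta:n\in\mathbb{Z}\}$ for a periodic $\eta$. $\Xi$ is periodically approximable if some sequence of periodic subshifts converges to it. *)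

theory Defs
  imports "HOL-Analysis.Analysis"
begin

definition fullshift_top :: "(int \<Rightarrow> 'a) topology" where
  "fullshift_top = product_topology (\<lambda>_::int. discrete_topology (UNIV::'a set)) UNIV"

definition shiftT :: "(int \<Rightarrow> 'a) \<Rightarrow> (int \<Rightarrow> 'a)" where
  "shiftT \<xi> = (\<lambda>j. \<xi> (j - 1))"

definition subshift :: "(int \<Rightarrow> 'a) set \<Rightarrow> bool" where
  "subshift \<Xi> \<longleftrightarrow> \<Xi> \<noteq> {} \<and> closedin fullshift_top \<Xi> \<and> shiftT ` \<Xi> = \<Xi>"

definition periodic :: "(int \<Rightarrow> 'a) \<Rightarrow> bool" where
  "periodic \<eta> \<longleftrightarrow> (\<exists>n::nat. n \<ge> 1 \<and> (shiftT ^^ n) \<eta> = \<eta>)"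

text \<open>Orbit over all integer powers; T^n \<eta> = (\<lambda>j. \<eta> (j - n)) for n in Z.\<close>
definition Orb :: "(int \<Rightarrow> 'a) \<Rightarrow> (int \<Rightarrow> 'a) set" where
  "Orb \<eta> = {(\<lambda>j. \<eta> (j - n)) | n::int. True}"

definition periodic_subshift :: "(int \<Rightarrow> 'a) set \<Rightarrow> bool" where
  "periodic_subshift \<Xi> \<longleftrightarrow> (\<exists>\<eta>. periodic \<eta> \<and> \<Xi> = Orb \<eta>)"

text \<open>Convergence of a sequence of subshifts in the Hausdorff (Vietoris) topology,
 expressed through the given basis.\<close>
definition vietoris_converges :: "(nat \<Rightarrow> (int \<Rightarrow> 'a) set) \<Rightarrow> (int \<Rightarrow> 'a) set \<Rightarrow> bool" where
  "vietoris_converges Xs \<Xi> \<longleftrightarrow>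
    (\<forall>F \<F>. closedin fullshift_top F \<and> finite \<F> \<and> (\<forall>U\<in>\<F>. openin fullshift_top U)
       \<and> \<Xi> \<inter> F = {} \<and> (\<forall>U\<in>\<F>. \<Xi> \<inter> U \<noteq> {})
       \<longrightarrow> (\<forall>\<^sub>F k in sequentially. Xs k \<inter> F = {} \<and> (\<forall>U\<in>\<F>. Xs k \<inter> U \<noteq> {})))"

definition periodically_approximable :: "(int \<Rightarrow> 'a) set \<Rightarrow> bool" where
  "periodically_approximable \<Xi> \<longleftrightarrow>
     (\<exists>Xs. (\<forall>k. periodic_subshift (Xs k)) \<and> vietoris_converges Xs \<Xi>)"

end

theory Submission
  imports Defs
begin

lemma shift_pow: "(shiftT ^^ n) \<eta> = (\<lambda>j. \<eta> (j - int n))"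
  by (induction n) (auto simp: shiftT_def algebra_simps)

lemma per_nat: fixes \<eta> :: "int \<Rightarrow> 'a" shows "\<forall>x. \<eta> x = \<eta> (x - d) \<Longrightarrow> \<eta> x = \<eta> (x - d * int c)"
proof (induction c arbitrary: x)
  case 0 then show ?case by simp
next
  case (Suc c)
  have "\<eta> (x - d * int (Suc c)) = \<eta> ((x - d * int c) - d)" by (simp add: algebra_simps)
  also have "\<dots> = \<eta> (x - d * int c)" using Suc.prems by metis
  also have "\<dots> = \<eta> x" using Suc.IH[OF Suc.prems] by metis
  finally show ?case by metis
qed

lemma per_int: fixes \<eta> :: "int \<Rightarrow> 'a" assumes "\<forall>x. \<eta> x = \<eta> (x - d)" shows "\<eta> x = \<eta> (x - d * c)"
proof (cases "c \<ge> 0")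
  case True
  then obtain m where "c = int m" using nonneg_int_cases by blast
  then show ?thesis using per_nat[OF assms, of x m] by metis
next
  case False
  define m where "m = nat (- c)"
  have m: "c = - int m" using False m_def by simp
  have 1: "\<eta> ((x + d * int m) - d * int m) = \<eta> (x + d * int m)" using per_nat[OF assms, of "x + d * int m" m] by metis
  have 2: "x + d * int m - d * int m = x" by simp
  have 3: "x - d * c = x + d * int m" using m by simp
  show ?thesis using 1 2 3 by metis
qed

lemma orb_finite:
  assumes "periodic \<eta>" shows "finite (Orb \<eta>)"
proof -
  obtain n where n: "n \<ge> 1" "(shiftT ^^ n) \<eta> = \<eta>" using assms periodic_def by blast
  have p: "\<forall>x. \<eta> x = \<eta> (x - int n)" using n(2) unfolding shift_pow by metis
  have "Orb \<eta> \<subseteq> (\<lambda>i. (\<lambda>j. \<eta> (j - i))) ` {0..<int n}"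
  proof
    fix z assume "z \<in> Orb \<eta>"
    then obtain m where z: "z = (\<lambda>j. \<eta> (j - m))" unfolding Orb_def by blast
    have "z = (\<lambda>j. \<eta> (j - m mod int n))"
    proof
      fix j
      have "\<eta> (j - m mod int n) = \<eta> ((j - m mod int n) - int n * (m div int n))"
        using per_int[OF p] by metis
      also have "(j - m mod int n) - int n * (m div int n) = j - m"
        by (metis diff_diff_eq mult_div_mod_eq add.commute)
      finally show "z j = \<eta> (j - m mod int n)" using z by simp
    qed
    moreover have "m mod int n \<in> {0..<int n}" using n(1) by simp
    ultimately show "z \<in> (\<lambda>i. (\<lambda>j. \<eta> (j - i))) ` {0..<int n}" by blast
  qed
  then show ?thesis using finite_subset by blast
qed

lemma orb_bounded_period:
  assumes "periodic \<eta>" "card (Orb \<eta>) \<le> N" "\<zeta> \<in> Orb \<eta>"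
  shows "\<zeta> x = \<zeta> (x - int (fact N))"
proof -
  have fin: "finite (Orb \<eta>)" using orb_finite[OF assms(1)] .
  let ?f = "\<lambda>i::nat. (\<lambda>j. \<eta> (j - int i))"
  have sub: "?f ` {0..N} \<subseteq> Orb \<eta>" unfolding Orb_def by blast
  have "\<not> inj_on ?f {0..N}"
  proof
    assume "inj_on ?f {0..N}"
    then have "card (?f ` {0..N}) = N + 1" by (simp add: card_image)
    moreover have "card (?f ` {0..N}) \<le> card (Orb \<eta>)" using card_mono[OF fin sub] .
    ultimately show False using assms(2) by simp
  qed
  then obtain i i' where ii: "i \<in> {0..N}" "i' \<in> {0..N}" "i < i'" "?f i = ?f i'"
    unfolding inj_on_def by (metis linorder_neqE_nat)
  define d where "d = i' - i"
  have d: "d \<ge> 1" "d \<le> N" using ii d_def by auto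
  have pd: "\<forall>x. \<eta> x = \<eta> (x - int d)"
  proof
    fix x
    have "\<eta> ((x + int i) - int i) = \<eta> ((x + int i) - int i')" using ii(4) by metis
    moreover have "x + int i - int i' = x - int d" using d_def ii(3) by (simp add: of_nat_diff)
    ultimately show "\<eta> x = \<eta> (x - int d)" by simp
  qed
  have "d dvd fact N" using d by (simp add: dvd_fact)
  then obtain c where c: "fact N = d * c" by blast
  obtain m where z: "\<zeta> = (\<lambda>j. \<eta> (j - m))" using assms(3) unfolding Orb_def by blast
  have "\<eta> (x - m) = \<eta> ((x - m) - int d * int c)" using per_int[OF pd] by metis
  then show ?thesis using z c by (simp add: algebra_simps)
qed

lemma topspace_fs: "topspace fullshift_top = UNIV"
  unfolding fullshift_top_def by (simp add: topspace_product_topology)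

lemma open_cyl: "openin fullshift_top {\<eta>. \<eta> j = a}"
proof -
  have "continuous_map fullshift_top (discrete_topology (UNIV::'a set)) (\<lambda>\<eta>. \<eta> j)"
    unfolding fullshift_top_def by (rule continuous_map_product_projection) simp
  then have "openin fullshift_top {\<eta> \<in> topspace fullshift_top. \<eta> j \<in> {a}}"
    by (rule openin_continuous_map_preimage) simp
  then show ?thesis by (simp add: topspace_fs)
qed

theorem corollary5:
  fixes \<Xi> :: "(int \<Rightarrow> 'a::finite) set" and Xs :: "nat \<Rightarrow> (int \<Rightarrow> 'a) set"
  assumes "subshift \<Xi>"
    and "periodically_approximable \<Xi>"
    and "\<forall>k. periodic_subshift (Xs k)"
    and "vietoris_converges Xs \<Xi>"
    and "\<exists>\<xi>\<in>\<Xi>. \<not> periodic \<xi>"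
  shows "filterlim (\<lambda>k. card (Xs k)) at_top sequentially"
  unfolding filterlim_at_top
proof (rule allI, rule ccontr)
  fix N
  assume nev: "\<not> (\<forall>\<^sub>F k in sequentially. N \<le> card (Xs k))"
  obtain \<xi> where xi: "\<xi> \<in> \<Xi>" "\<not> periodic \<xi>" using assms(5) by blast
  define M :: nat where "M = fact N"
  have M1: "M \<ge> (1::nat)" unfolding M_def by (simp add: fact_ge_1)
  have "(shiftT ^^ M) \<xi> \<noteq> \<xi>" using xi(2) M1 periodic_def by blast
  then obtain j where j: "\<xi> (j - int M) \<noteq> \<xi> j" unfolding shift_pow by fastforce
  define U where "U = {\<eta>. \<eta> j = \<xi> j} \<inter> {\<eta>. \<eta> (j - int M) = \<xi> (j - int M)}"
  have U: "openin fullshift_top U" unfolding U_def by (intro openin_Int open_cyl)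
  have "\<xi> \<in> U" unfolding U_def by simp
  then have "\<Xi> \<inter> U \<noteq> {}" using xi by blast
  then have ev: "\<forall>\<^sub>F k in sequentially. Xs k \<inter> {} = {} \<and> (\<forall>V\<in>{U}. Xs k \<inter> V \<noteq> {})"
  proof -
    have "closedin fullshift_top {}" by simp
    moreover have "finite {U}" by simp
    moreover have "\<forall>V\<in>{U}. openin fullshift_top V" using U by simp
    moreover have "\<Xi> \<inter> {} = {}" by simp
    moreover have "\<forall>V\<in>{U}. \<Xi> \<inter> V \<noteq> {}" using \<open>\<Xi> \<inter> U \<noteq> {}\<close> by simp
    ultimately show ?thesis using assms(4) unfolding vietoris_converges_def by blast
  qed
  have "\<exists>k. Xs k \<inter> U \<noteq> {} \<and> \<not> N \<le> card (Xs k)"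
  proof (rule ccontr)
    assume "\<not> ?thesis"
    then have "\<forall>\<^sub>F k in sequentially. N \<le> card (Xs k)"
      by (rule_tac eventually_mono[OF ev]) auto
    then show False using nev by simp
  qed
  then obtain k \<zeta> where k: "\<zeta> \<in> Xs k" "\<zeta> \<in> U" "card (Xs k) \<le> N" by force
  obtain \<eta> where e: "periodic \<eta>" "Xs k = Orb \<eta>" using assms(3) periodic_subshift_def by blast
  have "\<zeta> j = \<zeta> (j - int M)" unfolding M_def
    by (rule orb_bounded_period[OF e(1)]) (use k e(2) in auto)
  then show False using k(2) j unfolding U_def by auto
qed

end
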